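(* Let $G$ be an almost hypocyclic graph with exceptional vertex $w$. Then for every partition $(W,X)$ of $V(G)$ with $|W| > 1$ and $|X| > 1$, we have $p(G[W]) < |X|$ and $k(G[W]) < |X|$.
   Context: All graphs are finite, undirected, connected (except where stated, e.g. induced subgraphs), without loops or multiple edges. A graph is hamiltonian if it has a cycle through all its vertices. A graph $G$ is almost hypocyclic if there exists a vertex $w$ (the exceptional vertex) such that $G - w$ is non-hamiltonian but $G - v$ is hamiltonian for every vertex $v \neq w$. $G[S]$ denotes the subgraph induced by $S \subseteq V(G)$. For a possibly disconnected graph $G$: $p(G)$ is the minimum number of pairwise vertex-disjoint paths (a single vertex counts as a path) needed to cover all vertices of $G$; $V_1(G)$ is the set of vertices of degree $1$ in $G$; $I(G)$ is the set of all isolated vertices and isolated edges of $G$ (i.e. components isomorphic to $K_1$ or $K_2$), and $|I(G)|$ is their number; and $k(G)$ is defined recursively by $k(G) = 0$ if $G$ is empty, $k(G) = \max\{1, \lceil |V_1(G)|/2 \rceil\}$ if $I(G) = \emptyset$ but $G$ is not empty, and $k(G) = |I(G)| + k(G - I(G))$ otherwise, where $G - I(G)$ is obtained by removing the vertices of these isolated vertices and edges. *)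

theory Defs
  imports Main
begin

definition simple_graph :: "'a set \<Rightarrow> ('a \<Rightarrow> 'a \<Rightarrow> bool) \<Rightarrow> bool" where
  "simple_graph V E \<longleftrightarrow> finite V \<and> (\<forall>x y. E x y \<longrightarrow> x \<in> V \<and> y \<in> V \<and> x \<noteq> y \<and> E y x)"

definition is_path :: "'a set \<Rightarrow> ('a \<Rightarrow> 'a \<Rightarrow> bool) \<Rightarrow> 'a list \<Rightarrow> bool" where
  "is_path V E xs \<longleftrightarrow> xs \<noteq> [] \<and> distinct xs \<and> set xs \<subseteq> V \<and>
     (\<forall>i. Suc i < length xs \<longrightarrow> E (xs ! i) (xs ! Suc i))"

definition connected_graph :: "'a set \<Rightarrow> ('a \<Rightarrow> 'a \<Rightarrow> bool) \<Rightarrow> bool" where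
  "connected_graph V E \<longleftrightarrow> V \<noteq> {} \<and>
     (\<forall>x\<in>V. \<forall>y\<in>V. \<exists>xs. is_path V E xs \<and> hd xs = x \<and> last xs = y)"

definition induced :: "('a \<Rightarrow> 'a \<Rightarrow> bool) \<Rightarrow> 'a set \<Rightarrow> 'a \<Rightarrow> 'a \<Rightarrow> bool" where
  "induced E S = (\<lambda>x y. E x y \<and> x \<in> S \<and> y \<in> S)"

definition hamiltonian :: "'a set \<Rightarrow> ('a \<Rightarrow> 'a \<Rightarrow> bool) \<Rightarrow> bool" where
  "hamiltonian V E \<longleftrightarrow> (\<exists>xs. is_path V E xs \<and> set xs = V \<and> length xs \<ge> 3 \<and>
      E (last xs) (hd xs))"

definition almost_hypocyclic :: "'a set \<Rightarrow> ('a \<Rightarrow> 'a \<Rightarrow> bool) \<Rightarrow> 'a \<Rightarrow> bool" where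
  "almost_hypocyclic V E w \<longleftrightarrow> simple_graph V E \<and> connected_graph V E \<and> w \<in> V \<and>
     \<not> hamiltonian (V - {w}) (induced E (V - {w})) \<and>
     (\<forall>v\<in>V. v \<noteq> w \<longrightarrow> hamiltonian (V - {v}) (induced E (V - {v})))"

definition path_cover :: "'a set \<Rightarrow> ('a \<Rightarrow> 'a \<Rightarrow> bool) \<Rightarrow> 'a list set \<Rightarrow> bool" where
  "path_cover V E P \<longleftrightarrow> finite P \<and> (\<forall>xs\<in>P. is_path V E xs) \<and>
     (\<forall>xs\<in>P. \<forall>ys\<in>P. xs \<noteq> ys \<longrightarrow> set xs \<inter> set ys = {}) \<and>
     (\<Union>xs\<in>P. set xs) = V"

definition path_cover_number :: "'a set \<Rightarrow> ('a \<Rightarrow> 'a \<Rightarrow> bool) \<Rightarrow> nat" where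
  "path_cover_number V E = (LEAST n. \<exists>P. path_cover V E P \<and> card P = n)"

definition deg :: "'a set \<Rightarrow> ('a \<Rightarrow> 'a \<Rightarrow> bool) \<Rightarrow> 'a \<Rightarrow> nat" where
  "deg V E v = card {u\<in>V. E v u}"

definition V1 :: "'a set \<Rightarrow> ('a \<Rightarrow> 'a \<Rightarrow> bool) \<Rightarrow> 'a set" where
  "V1 V E = {v\<in>V. deg V E v = 1}"

definition iso_verts :: "'a set \<Rightarrow> ('a \<Rightarrow> 'a \<Rightarrow> bool) \<Rightarrow> 'a set" where
  "iso_verts V E = {v\<in>V. deg V E v = 0}"

definition iso_edges :: "'a set \<Rightarrow> ('a \<Rightarrow> 'a \<Rightarrow> bool) \<Rightarrow> 'a set set" where
  "iso_edges V E = {{u, v} | u v. u \<in> V \<and> v \<in> V \<and> E u v \<and> deg V E u = 1 \<and> deg V E v = 1}"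

definition card_I :: "'a set \<Rightarrow> ('a \<Rightarrow> 'a \<Rightarrow> bool) \<Rightarrow> nat" where
  "card_I V E = card (iso_verts V E) + card (iso_edges V E)"

definition verts_I :: "'a set \<Rightarrow> ('a \<Rightarrow> 'a \<Rightarrow> bool) \<Rightarrow> 'a set" where
  "verts_I V E = iso_verts V E \<union> \<Union>(iso_edges V E)"

text \<open>k(G), defined by the recursion in the paper; the recursion is run with
fuel (card V + 1), which is always enough since every recursive step removes
at least one vertex.\<close>
fun k_aux :: "nat \<Rightarrow> 'a set \<Rightarrow> ('a \<Rightarrow> 'a \<Rightarrow> bool) \<Rightarrow> nat" where
  "k_aux 0 V E = 0"
| "k_aux (Suc n) V E =
     (if V = {} then 0
      else if card_I V E = 0 then max 1 ((card (V1 V E) + 1) div 2)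
      else card_I V E + k_aux n (V - verts_I V E) (induced E (V - verts_I V E)))"

definition k_num :: "'a set \<Rightarrow> ('a \<Rightarrow> 'a \<Rightarrow> bool) \<Rightarrow> nat" where
  "k_num V E = k_aux (Suc (card V)) V E"

end

theory Submission
  imports Defs
begin


lemma is_path_succ: "is_path V E xs \<longleftrightarrow> xs \<noteq> [] \<and> distinct xs \<and> set xs \<subseteq> V \<and> successively E xs"
  unfolding is_path_def successively_conv_nth by blast

lemma is_path_mono: "is_path V E xs \<Longrightarrow> V \<subseteq> V' \<Longrightarrow> is_path V' E xs"
  unfolding is_path_def by blast

lemma cover_split:
  assumes "distinct ys" "successively E ys"
  shows "\<exists>P. path_cover (set ys - S) E P \<and>
     card P \<le> card (set ys \<inter> S) + (if ys \<noteq> [] \<and> hd ys \<notin> S then 1 else 0) \<and>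
     (ys \<noteq> [] \<and> hd ys \<notin> S \<longrightarrow> (\<exists>p\<in>P. hd p = hd ys))"
  using assms
proof (induction ys)
  case Nil
  show ?case by (rule exI[of _ "{}"]) (simp add: path_cover_def)
next
  case (Cons y zs)
  have dz: "distinct zs" and yz: "y \<notin> set zs" using Cons.prems by auto
  have sz: "successively E zs" and eh: "zs \<noteq> [] \<Longrightarrow> E y (hd zs)"
    using Cons.prems(2) by (auto simp: successively_Cons)
  obtain Pz where pc: "path_cover (set zs - S) E Pz"
    and cz: "card Pz \<le> card (set zs \<inter> S) + (if zs \<noteq> [] \<and> hd zs \<notin> S then 1 else 0)"
    and hz: "zs \<noteq> [] \<and> hd zs \<notin> S \<longrightarrow> (\<exists>p\<in>Pz. hd p = hd zs)"
    using Cons.IH[OF dz sz] by blast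
  have finPz: "finite Pz" using pc by (simp add: path_cover_def)
  have pz_paths: "\<And>p. p \<in> Pz \<Longrightarrow> is_path (set zs - S) E p" using pc by (simp add: path_cover_def)
  have pz_disj: "\<And>p q. p \<in> Pz \<Longrightarrow> q \<in> Pz \<Longrightarrow> p \<noteq> q \<Longrightarrow> set p \<inter> set q = {}"
    using pc by (simp add: path_cover_def)
  have pz_un: "(\<Union>p\<in>Pz. set p) = set zs - S" using pc by (simp add: path_cover_def)
  have ynot: "\<And>p. p \<in> Pz \<Longrightarrow> y \<notin> set p" using pz_paths yz unfolding is_path_def by blast
  have sub: "set zs - S \<subseteq> set (y # zs) - S" by auto
  show ?case
  proof (cases "y \<in> S")
    case True
    have "card (set (y#zs) \<inter> S) = Suc (card (set zs \<inter> S))"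
      using True yz by simp
    then show ?thesis using True pc cz
      by (intro exI[of _ Pz]) (auto simp: Diff_insert_absorb split: if_splits)
  next
    case yS: False
    show ?thesis
    proof (cases "zs \<noteq> [] \<and> hd zs \<notin> S")
      case False
      define P where "P = insert [y] Pz"
      have nin: "[y] \<notin> Pz" using ynot by force
      have "card P = Suc (card Pz)" unfolding P_def using nin finPz by simp
      moreover have "card (set (y#zs) \<inter> S) = card (set zs \<inter> S)" using yS by simp
      moreover have "path_cover (set (y # zs) - S) E P"
        unfolding path_cover_def P_def
      proof (intro conjI)
        show "finite (insert [y] Pz)" using finPz by simp
        show "\<forall>xs\<in>insert [y] Pz. is_path (set (y # zs) - S) E xs"
          using pz_paths is_path_mono[OF _ sub] yS by (auto simp: is_path_def)
        show "\<forall>xs\<in>insert [y] Pz. \<forall>ys\<in>insert [y] Pz. xs \<noteq> ys \<longrightarrow> set xs \<inter> set ys = {}"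
          using pz_disj ynot by auto
        show "(\<Union>xs\<in>insert [y] Pz. set xs) = set (y # zs) - S" using pz_un yS by auto
      qed
      ultimately show ?thesis using False cz yS
        by (intro exI[of _ P]) (auto simp: P_def split: if_splits)
    next
      case True
      then obtain p where pP: "p \<in> Pz" and hp: "hd p = hd zs" using hz by blast
      define P where "P = insert (y # p) (Pz - {p})"
      have "card P \<le> card Pz"
      proof -
        have "card P \<le> Suc (card (Pz - {p}))" unfolding P_def using finPz
          by (simp add: card_insert_le_m1)
        also have "\<dots> = card Pz" using pP finPz
          by (metis card_Diff1_less_iff card_Suc_Diff1 )
        finally show ?thesis .
      qed
      moreover have "card (set (y#zs) \<inter> S) = card (set zs \<inter> S)" using yS by simp
      moreover have "path_cover (set (y # zs) - S) E P"
        unfolding path_cover_def P_def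
      proof (intro conjI)
        show "finite (insert (y # p) (Pz - {p}))" using finPz by simp
        have ip: "is_path (set zs - S) E p" using pz_paths pP .
        have "is_path (set (y # zs) - S) E (y # p)"
          using ip ynot[OF pP] yS eh True hp unfolding is_path_succ
          by (auto simp: successively_Cons)
        then show "\<forall>xs\<in>insert (y # p) (Pz - {p}). is_path (set (y # zs) - S) E xs"
          using pz_paths is_path_mono[OF _ sub] by auto
        show "\<forall>xs\<in>insert (y # p) (Pz - {p}). \<forall>ys\<in>insert (y # p) (Pz - {p}). xs \<noteq> ys \<longrightarrow> set xs \<inter> set ys = {}"
          using pz_disj ynot pP by fastforce
        show "(\<Union>xs\<in>insert (y # p) (Pz - {p}). set xs) = set (y # zs) - S"
          using pz_un yS pP by auto
      qed
      ultimately show ?thesis using True cz yS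
        by (intro exI[of _ P]) (auto simp: P_def)
    qed
  qed
qed



lemma deg1_nbrs:
  assumes "finite V" "deg V E u = 1" "E u v" "v \<in> V"
  shows "{z\<in>V. E u z} = {v}"
proof -
  have "card {z\<in>V. E u z} = 1" using assms(2) by (simp add: deg_def)
  then obtain a where "{z\<in>V. E u z} = {a}" by (auto simp: card_Suc_eq)
  then show ?thesis using assms(3,4) by auto
qed

lemma deg0_nbrs:
  assumes "finite V" "deg V E u = 0"
  shows "{z\<in>V. E u z} = {}"
  using assms by (simp add: deg_def)

definition CC :: "'a set \<Rightarrow> ('a \<Rightarrow> 'a \<Rightarrow> bool) \<Rightarrow> 'a \<Rightarrow> 'a set" where
  "CC V E x = {y\<in>V. y = x \<or> E x y}"

lemma vI_sub: "simple_graph V E \<Longrightarrow> verts_I V E \<subseteq> V"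
  unfolding verts_I_def iso_verts_def iso_edges_def by auto

lemma vI_closed:
  assumes sg: "simple_graph V E" and x: "x \<in> verts_I V E" and e: "E x y"
  shows "y \<in> verts_I V E \<and> CC V E x = CC V E y"
proof -
  have fin: "finite V" and sym: "\<And>a b. E a b \<Longrightarrow> a \<in> V \<and> b \<in> V \<and> a \<noteq> b \<and> E b a"
    using sg unfolding simple_graph_def by blast+
  have yV: "y \<in> V" using sym[OF e] by blast
  consider (iv) "x \<in> iso_verts V E" | (ie) u v where "u \<in> V" "v \<in> V" "E u v" "deg V E u = 1" "deg V E v = 1" "x = u \<or> x = v"
    using x unfolding verts_I_def iso_edges_def by blast
  then show ?thesis
  proof cases
    case iv
    then have "{z\<in>V. E x z} = {}" using deg0_nbrs[OF fin] unfolding iso_verts_def by blast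
    then show ?thesis using e yV by blast
  next
    case (ie u v)
    note uv = ie
    have Nu: "{z\<in>V. E u z} = {v}" using deg1_nbrs[OF fin uv(4,3,2)] .
    have Nv: "{z\<in>V. E v z} = {u}" using deg1_nbrs[OF fin uv(5) _ uv(1)] sym[OF uv(3)] by blast
    have xuv: "x = u \<or> x = v" using ie(6) .
    have uvI: "u \<in> verts_I V E" "v \<in> verts_I V E"
    proof -
      have "{u,v} \<in> iso_edges V E" unfolding iso_edges_def using uv(1-5) by blast
      then show "u \<in> verts_I V E" "v \<in> verts_I V E" unfolding verts_I_def by blast+
    qed
    have Cu: "CC V E u = {u,v}" using Nu uv(1) unfolding CC_def by blast
    have Cv: "CC V E v = {u,v}" using Nv uv(2) unfolding CC_def by blast
    from xuv show ?thesis
    proof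
      assume xu: "x = u"
      then have "y \<in> {z\<in>V. E u z}" using e yV by simp
      then have "y = v" using Nu by simp
      then show ?thesis using xu uvI Cu Cv by simp
    next
      assume xv: "x = v"
      then have "y \<in> {z\<in>V. E v z}" using e yV by simp
      then have "y = u" using Nv by simp
      then show ?thesis using xv uvI Cu Cv by simp
    qed
  qed
qed

lemma CC_self: "x \<in> V \<Longrightarrow> x \<in> CC V E x"
  unfolding CC_def by auto

definition FF :: "'a set \<Rightarrow> ('a \<Rightarrow> 'a \<Rightarrow> bool) \<Rightarrow> 'a \<Rightarrow> 'a set" where
  "FF V E x = (if x \<in> verts_I V E then CC V E x else {})"

lemma FF_edge:
  assumes sg: "simple_graph V E" and e: "E x y"
  shows "FF V E x = FF V E y"
proof -
  have e': "E y x" using sg e unfolding simple_graph_def by blast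
  show ?thesis
  proof (cases "x \<in> verts_I V E")
    case True then show ?thesis using vI_closed[OF sg True e] unfolding FF_def by simp
  next
    case False
    have "y \<notin> verts_I V E" using vI_closed[OF sg _ e'] False by blast
    then show ?thesis using False unfolding FF_def by simp
  qed
qed

lemma FF_path:
  assumes sg: "simple_graph V E" and p: "is_path V E p" and z: "z \<in> set p"
  shows "FF V E z = FF V E (hd p)"
proof -
  have "\<forall>i. i < length p \<longrightarrow> FF V E (p ! i) = FF V E (p ! 0)"
  proof (intro allI)
    fix i show "i < length p \<longrightarrow> FF V E (p ! i) = FF V E (p ! 0)"
    proof (induction i)
      case 0 then show ?case by simp
    next
      case (Suc i)
      show ?case
      proof
        assume "Suc i < length p"
        then have "E (p ! i) (p ! Suc i)" using p unfolding is_path_def by blast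
        then show "FF V E (p ! Suc i) = FF V E (p ! 0)"
        proof -
          have "FF V E (p ! i) = FF V E (p ! Suc i)" using FF_edge[OF sg \<open>E (p ! i) (p ! Suc i)\<close>] .
          moreover have "FF V E (p ! i) = FF V E (p ! 0)" using Suc.IH \<open>Suc i < length p\<close> by simp
          ultimately show ?thesis by simp
        qed
      qed
    qed
  qed
  moreover obtain i where "i < length p" "z = p ! i" using z by (auto simp: in_set_conv_nth)
  moreover have "hd p = p ! 0" using p unfolding is_path_def by (simp add: hd_conv_nth)
  ultimately show ?thesis by simp
qed

lemma FF_nonempty: "x \<in> V \<Longrightarrow> FF V E x \<noteq> {} \<longleftrightarrow> x \<in> verts_I V E"
  unfolding FF_def using CC_self by fastforce

lemma path_dich:
  assumes sg: "simple_graph V E" and p: "is_path V E p"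
  shows "set p \<subseteq> verts_I V E \<or> set p \<inter> verts_I V E = {}"
proof -
  have pV: "set p \<subseteq> V" using p unfolding is_path_def by blast
  have hV: "hd p \<in> set p" using p unfolding is_path_def by simp
  show ?thesis
  proof (cases "hd p \<in> verts_I V E")
    case True
    then have "FF V E (hd p) \<noteq> {}" using FF_nonempty[of "hd p" V E] pV hV True by auto
    then have "\<forall>z\<in>set p. z \<in> verts_I V E"
    proof (intro ballI)
      fix z assume z: "z \<in> set p"
      then have "FF V E z = FF V E (hd p)" using FF_path[OF sg p] by blast
      moreover have "z \<in> V" using z pV by blast
      ultimately show "z \<in> verts_I V E" using FF_nonempty[of z V E] \<open>FF V E (hd p) \<noteq> {}\<close> by simp
    qed
    then show ?thesis by blast
  next
    case False
    then have "FF V E (hd p) = {}" using FF_nonempty[of "hd p" V E] pV hV False by auto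
    then have "\<forall>z\<in>set p. z \<notin> verts_I V E"
    proof (intro ballI)
      fix z assume z: "z \<in> set p"
      then have "FF V E z = FF V E (hd p)" using FF_path[OF sg p] by blast
      moreover have "z \<in> V" using z pV by blast
      ultimately show "z \<notin> verts_I V E" using FF_nonempty[of z V E] \<open>FF V E (hd p) = {}\<close> by simp
    qed
    then show ?thesis by blast
  qed
qed



lemma V1_ends:
  assumes sg: "simple_graph V E" and pc: "path_cover V E P"
  shows "V1 V E \<subseteq> hd ` P \<union> last ` P"
proof
  fix v assume v: "v \<in> V1 V E"
  have fin: "finite V" using sg by (simp add: simple_graph_def)
  have vV: "v \<in> V" and dv: "deg V E v = 1" using v by (auto simp: V1_def)
  obtain p where pP: "p \<in> P" and vp: "v \<in> set p" using pc vV unfolding path_cover_def by blast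
  have ip: "is_path V E p" using pc pP unfolding path_cover_def by blast
  obtain i where il: "i < length p" and vi: "v = p ! i" using vp by (auto simp: in_set_conv_nth)
  have "i = 0 \<or> i = length p - 1"
  proof (rule ccontr)
    assume "\<not> (i = 0 \<or> i = length p - 1)"
    then have i1: "0 < i" "Suc i < length p" using il by auto
    define a where "a = p ! (i - 1)"
    define b where "b = p ! Suc i"
    have ea: "E a v"
    proof -
      have "Suc (i - 1) < length p" using i1 by simp
      then have "E (p ! (i - 1)) (p ! Suc (i - 1))" using ip unfolding is_path_def by blast
      then show ?thesis using i1 unfolding a_def vi by simp
    qed
    have eb: "E v b" using ip i1 unfolding is_path_def b_def vi by blast
    have ea': "E v a" and aV: "a \<in> V" using sg ea unfolding simple_graph_def by blast+
    have bV: "b \<in> V" using sg eb unfolding simple_graph_def by blast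
    have "a \<noteq> b"
    proof -
      have "distinct p" using ip unfolding is_path_def by simp
      moreover have "i - 1 \<noteq> Suc i" "i - 1 < length p" using i1 by auto
      ultimately show ?thesis unfolding a_def b_def using i1 by (simp add: nth_eq_iff_index_eq)
    qed
    then have "card {a, b} = 2" by simp
    moreover have "{a,b} \<subseteq> {u\<in>V. E v u}" using ea' eb aV bV by blast
    moreover have "finite {u\<in>V. E v u}" using fin by simp
    ultimately have "card {a,b} \<le> card {u\<in>V. E v u}" by (intro card_mono)
    then have "2 \<le> deg V E v" using \<open>card {a,b} = 2\<close> unfolding deg_def by simp
    then show False using dv by simp
  qed
  moreover have "p \<noteq> []" using ip unfolding is_path_def by simp
  ultimately have "v = hd p \<or> v = last p" using vi by (auto simp: hd_conv_nth last_conv_nth)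
  then show "v \<in> hd ` P \<union> last ` P" using pP by blast
qed

lemma k_aux_le:
  assumes "simple_graph V E" "path_cover V E P"
  shows "k_aux n V E \<le> card P"
  using assms
proof (induction n arbitrary: V E P)
  case 0 then show ?case by simp
next
  case (Suc n)
  note sg = Suc.prems(1) and pc = Suc.prems(2)
  have fin: "finite V" using sg by (simp add: simple_graph_def)
  have finP: "finite P" and paths: "\<And>p. p \<in> P \<Longrightarrow> is_path V E p"
    and disj: "\<And>p q. p \<in> P \<Longrightarrow> q \<in> P \<Longrightarrow> p \<noteq> q \<Longrightarrow> set p \<inter> set q = {}"
    and un: "(\<Union>p\<in>P. set p) = V" using pc unfolding path_cover_def by blast+
  show ?case
  proof (cases "V = {}")
    case True then show ?thesis by simp
  next
    case Vne: False
    have Pne: "P \<noteq> {}" using un Vne by auto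
    then have cP: "1 \<le> card P" using finP by (simp add: Suc_leI card_gt_0_iff)
    show ?thesis
    proof (cases "card_I V E = 0")
      case True
      have "card (V1 V E) \<le> card (hd ` P \<union> last ` P)"
        using V1_ends[OF sg pc] finP by (intro card_mono) auto
      also have "\<dots> \<le> card (hd ` P) + card (last ` P)" by (rule card_Un_le)
      also have "\<dots> \<le> card P + card P" using finP by (intro add_mono card_image_le)
      finally have "(card (V1 V E) + 1) div 2 \<le> card P" by linarith
      then show ?thesis using True Vne cP by simp
    next
      case False
      define vI where "vI = verts_I V E"
      define V' where "V' = V - vI"
      define PI where "PI = {p\<in>P. set p \<subseteq> vI}"
      define P' where "P' = {p\<in>P. \<not> set p \<subseteq> vI}"
      have dich: "\<And>p. p \<in> P \<Longrightarrow> set p \<subseteq> vI \<or> set p \<inter> vI = {}"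
        using path_dich[OF sg] paths unfolding vI_def by blast
      have vIV: "vI \<subseteq> V" using vI_sub[OF sg] unfolding vI_def .
      have sg': "simple_graph V' (induced E V')"
        using sg fin unfolding simple_graph_def induced_def V'_def by auto
      have pc': "path_cover V' (induced E V') P'"
        unfolding path_cover_def
      proof (intro conjI)
        show "finite P'" using finP unfolding P'_def by simp
        show "\<forall>xs\<in>P'. is_path V' (induced E V') xs"
        proof
          fix xs assume xs: "xs \<in> P'"
          then have ip: "is_path V E xs" and d: "set xs \<inter> vI = {}"
            using paths dich unfolding P'_def by auto
          then have s: "set xs \<subseteq> V'" unfolding V'_def is_path_def by blast
          show "is_path V' (induced E V') xs" using ip s unfolding is_path_def induced_def
            by (auto dest: nth_mem)
        qed
        show "\<forall>xs\<in>P'. \<forall>ys\<in>P'. xs \<noteq> ys \<longrightarrow> set xs \<inter> set ys = {}"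
          using disj unfolding P'_def by blast
        show "(\<Union>xs\<in>P'. set xs) = V'"
        proof
          show "(\<Union>xs\<in>P'. set xs) \<subseteq> V'"
            using dich un unfolding P'_def V'_def by blast
          show "V' \<subseteq> (\<Union>xs\<in>P'. set xs)"
          proof
            fix x assume x: "x \<in> V'"
            then obtain p where "p \<in> P" "x \<in> set p" using un unfolding V'_def by blast
            then show "x \<in> (\<Union>xs\<in>P'. set xs)" using x unfolding P'_def V'_def by blast
          qed
        qed
      qed
      have IH: "k_aux n V' (induced E V') \<le> card P'" using Suc.IH[OF sg' pc'] .
      have cardP: "card P = card PI + card P'"
        unfolding PI_def P'_def using finP by (subst card_Un_disjoint[symmetric]) (auto intro: arg_cong[where f=card])
      define C where "C = CC V E"
      have finIV: "finite (iso_verts V E)" using fin unfolding iso_verts_def by simp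
      have IEsub: "iso_edges V E \<subseteq> Pow V" unfolding iso_edges_def by auto
      have finIE: "finite (iso_edges V E)" using finite_subset[OF IEsub] fin by simp
      have disjVE: "(\<lambda>x. {x}) ` iso_verts V E \<inter> iso_edges V E = {}"
      proof -
        have "\<And>x u v. {x} = {u,v} \<Longrightarrow> E u v \<Longrightarrow> False"
        proof -
          fix x u v assume eq: "{x} = {u,v}" and e: "E u v"
          have "u \<in> {x}" "v \<in> {x}" using eq by auto
          then have "u = v" by simp
          then show False using e sg unfolding simple_graph_def by blast
        qed
        then show ?thesis unfolding iso_edges_def by blast
      qed
      have "card_I V E = card ((\<lambda>x. {x}) ` iso_verts V E) + card (iso_edges V E)"
        unfolding card_I_def by (simp add: card_image)
      also have "\<dots> = card ((\<lambda>x. {x}) ` iso_verts V E \<union> iso_edges V E)"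
        using finIV finIE disjVE by (simp add: card_Un_disjoint)
      also have "\<dots> \<le> card (C ` vI)"
      proof (rule card_mono)
        show "finite (C ` vI)" using vIV fin finite_subset by blast
        show "(\<lambda>x. {x}) ` iso_verts V E \<union> iso_edges V E \<subseteq> C ` vI"
        proof
          fix s assume "s \<in> (\<lambda>x. {x}) ` iso_verts V E \<union> iso_edges V E"
          then consider (a) x where "x \<in> iso_verts V E" "s = {x}"
            | (b) u v where "s = {u,v}" "u \<in> V" "v \<in> V" "E u v" "deg V E u = 1" "deg V E v = 1"
            unfolding iso_edges_def by blast
          then show "s \<in> C ` vI"
          proof cases
            case a
            then have "{z\<in>V. E x z} = {}" using deg0_nbrs[OF fin] unfolding iso_verts_def by blast
            then have "C x = {x}" using a unfolding C_def CC_def iso_verts_def by auto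
            moreover have "x \<in> vI" using a unfolding vI_def verts_I_def by blast
            ultimately show ?thesis using a by blast
          next
            case b
            have "{z\<in>V. E u z} = {v}" using deg1_nbrs[OF fin b(5,4,3)] .
            then have "C u = {u,v}" using b unfolding C_def CC_def by blast
            moreover have "s \<in> iso_edges V E" unfolding iso_edges_def using b by blast
            then have "u \<in> vI" using b unfolding vI_def verts_I_def by blast
            ultimately show ?thesis using b by blast
          qed
        qed
      qed
      also have "\<dots> \<le> card ((\<lambda>p. C (hd p)) ` PI)"
      proof (rule card_mono)
        show "finite ((\<lambda>p. C (hd p)) ` PI)" using finP unfolding PI_def by simp
        show "C ` vI \<subseteq> (\<lambda>p. C (hd p)) ` PI"
        proof
          fix s assume "s \<in> C ` vI"
          then obtain x where x: "x \<in> vI" "s = C x" by blast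
          then obtain p where pP: "p \<in> P" and xp: "x \<in> set p" using un vIV by blast
          have ip: "is_path V E p" using paths pP .
          have "set p \<subseteq> vI" using dich[OF pP] xp x(1) by blast
          then have pI: "p \<in> PI" using pP unfolding PI_def by blast
          have hp: "hd p \<in> set p" using ip unfolding is_path_def by simp
          have "FF V E x = FF V E (hd p)" using FF_path[OF sg ip xp] .
          moreover have "hd p \<in> vI" using hp \<open>set p \<subseteq> vI\<close> by blast
          ultimately have "C x = C (hd p)" using x(1) unfolding FF_def C_def vI_def by simp
          then show "s \<in> (\<lambda>p. C (hd p)) ` PI" using x pI by blast
        qed
      qed
      also have "\<dots> \<le> card PI" using finP unfolding PI_def by (intro card_image_le) simp
      finally have cI: "card_I V E \<le> card PI" .
      have "k_aux (Suc n) V E = card_I V E + k_aux n V' (induced E V')"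
        using Vne False unfolding V'_def vI_def by simp
      also have "\<dots> \<le> card P" using cI IH cardP by simp
      finally show ?thesis .
    qed
  qed
qed



lemma rotate_cycle:
  assumes "successively E xs" "xs \<noteq> []" "E (last xs) (hd xs)"
  shows "successively E (rotate n xs) \<and> E (last (rotate n xs)) (hd (rotate n xs))"
proof (induction n)
  case 0 then show ?case using assms by simp
next
  case (Suc n)
  define ys where "ys = rotate n xs"
  have yne: "ys \<noteq> []" using assms(2) unfolding ys_def by simp
  then obtain y zs where yz: "ys = y # zs" by (cases ys) auto
  have s: "successively E (y # zs)" and l: "E (last (y#zs)) y" using Suc.IH yz unfolding ys_def by auto
  have "rotate (Suc n) xs = zs @ [y]" using yz unfolding ys_def by simp
  moreover have "successively E (zs @ [y])"
    using s l by (cases "zs = []") (auto simp: successively_Cons successively_append_iff)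
  moreover have "E (last (zs @ [y])) (hd (zs @ [y]))"
    using s l by (cases "zs = []") (auto simp: successively_Cons)
  ultimately show ?case by simp
qed

lemma cover_induced: "path_cover W E P \<Longrightarrow> path_cover W (induced E W) P"
  unfolding path_cover_def is_path_def induced_def by (auto dest: nth_mem)

theorem lemma3p1:
  fixes V :: "'a set" and E :: "'a \<Rightarrow> 'a \<Rightarrow> bool" and w :: 'a and W X :: "'a set"
  assumes "almost_hypocyclic V E w"
    and "W \<union> X = V" and "W \<inter> X = {}"
    and "card W > 1" and "card X > 1"
  shows "path_cover_number W (induced E W) < card X \<and> k_num W (induced E W) < card X"
proof -
  have sg: "simple_graph V E" and ham: "\<And>v. v \<in> V \<Longrightarrow> v \<noteq> w \<Longrightarrow> hamiltonian (V - {v}) (induced E (V - {v}))"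
    using assms(1) unfolding almost_hypocyclic_def by blast+
  have fin: "finite V" using sg by (simp add: simple_graph_def)
  have finX: "finite X" using fin assms(2) by (metis finite_Un)
  have "card (X - {w}) > 0" using assms(5) finX by (simp add: card_Diff_singleton_if)
  then obtain v where vX: "v \<in> X" and vw: "v \<noteq> w" by (metis Diff_iff card_gt_0_iff ex_in_conv insertCI)
  have vV: "v \<in> V" using vX assms(2) by blast
  obtain cs where cp: "is_path (V - {v}) (induced E (V - {v})) cs" and scs: "set cs = V - {v}"
    and lc: "induced E (V - {v}) (last cs) (hd cs)"
    using ham[OF vV vw] unfolding hamiltonian_def by blast
  have cne: "cs \<noteq> []" and dcs: "distinct cs" using cp unfolding is_path_def by auto
  have sE: "successively E cs"
  proof -
    have "successively (induced E (V - {v})) cs" using cp unfolding is_path_succ by blast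
    then show ?thesis by (rule successively_mono) (simp add: induced_def)
  qed
  have lE: "E (last cs) (hd cs)" using lc by (simp add: induced_def)
  have "card (X - {v}) > 0" using assms(5) finX vX by (simp add: card_Diff_singleton_if)
  then obtain x1 where x1X: "x1 \<in> X" and x1v: "x1 \<noteq> v" by (metis Diff_iff card_gt_0_iff ex_in_conv insertCI)
  have x1cs: "x1 \<in> set cs" using scs x1X x1v assms(2) by blast
  then obtain j where jl: "j < length cs" and cj: "cs ! j = x1" by (auto simp: in_set_conv_nth)
  define rs where "rs = rotate j cs"
  have rsp: "successively E rs" using rotate_cycle[OF sE cne lE] unfolding rs_def by blast
  have hrs: "hd rs = x1" unfolding rs_def using cne jl cj by (simp add: hd_rotate_conv_nth)
  have rne: "rs \<noteq> []" using cne unfolding rs_def by simp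
  then obtain ts where rts: "rs = x1 # ts" using hrs by (cases rs) auto
  have drs: "distinct rs" using dcs unfolding rs_def by simp
  have dts: "distinct ts" and x1ts: "x1 \<notin> set ts" using drs rts by auto
  have sts: "successively E ts" using rsp rts by (auto simp: successively_Cons)
  have setts: "set ts = V - {v} - {x1}"
  proof -
    have "set rs = V - {v}" using scs unfolding rs_def by simp
    then show ?thesis using rts x1ts by auto
  qed
  obtain P where pc: "path_cover (set ts - X) E P"
    and cP: "card P \<le> card (set ts \<inter> X) + (if ts \<noteq> [] \<and> hd ts \<notin> X then 1 else 0)"
    using cover_split[OF dts sts, of X] by blast
  have WW: "set ts - X = W" using setts assms(2,3) vX x1X by blast
  have "set ts \<inter> X = X - {v} - {x1}" using setts assms(2) by blast
  then have "card (set ts \<inter> X) = card X - 2"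
    using finX vX x1X x1v by (simp add: card_Diff_singleton_if)
  then have cP2: "card P < card X" using cP assms(5) by (simp split: if_splits)
  have pcW: "path_cover W (induced E W) P" using cover_induced pc WW by metis
  have "path_cover_number W (induced E W) \<le> card P"
    unfolding path_cover_number_def using pcW by (intro Least_le) blast
  moreover have "k_num W (induced E W) \<le> card P"
  proof -
    have "simple_graph W (induced E W)"
      using sg fin assms(2) unfolding simple_graph_def induced_def by auto
    then show ?thesis unfolding k_num_def using k_aux_le pcW by blast
  qed
  ultimately show ?thesis using cP2 by linarith
qed

end
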